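(* Let $G=(V,E)$ be an infinite graph satisfying the $CDE(n,-K)$ condition for some $n>0$, $K>0$, with $D_\mu<\infty$ and $D_w<\infty$. Let $u$ be a positive solution of the heat equation $\partial_t u=\Delta u$ on $V$. Then for all vertices and all $t>0$, $$\frac{\Gamma(\sqrt{u})}{u}-\frac{\partial_{t}(\sqrt{u})}{\sqrt{u}}\leq \frac{n}{2t}+\sqrt{\tfrac{1}{2}nKD_{\mu}(D_{w}+1)}.$$
   Context: Graphs: $G=(V,E)$ is a connected, locally finite graph; each edge $xy$ carries a weight $w_{xy}>0$ (possibly $w_{xy}\neq w_{yx}$), and $\mu:V\to(0,\infty)$ is a vertex measure. Write $y\sim x$ if $xy\in E$, $\deg(x)=\sum_{y\sim x}w_{xy}<\infty$, $D_\mu=\sup_{x\in V}\deg(x)/\mu(x)$, $D_w=\sup_{x\sim y}\deg(x)/w_{xy}$. The Laplacian is $\Delta f(x)=\frac{1}{\mu(x)}\sum_{y\sim x}w_{xy}(f(y)-f(x))$. The gradient forms are $2\Gamma(f,g)=\Delta(fg)-f\Delta g-g\Delta f$, $2\Gamma_2(f,g)=\Delta\Gamma(f,g)-\Gamma(f,\Delta g)-\Gamma(\Delta f,g)$, $\Gamma(f)=\Gamma(f,f)$, $\Gamma_2(f)=\Gamma_2(f,f)$. The graph satisfies $CDE(n,K)$ ($n>0$, $K\in\mathbb R$) if for every $f:V\to(0,\infty)$ and every vertex, $\widetilde\Gamma_2(f)\ge\frac1n(\Delta f)^2+K\Gamma(f)$, where $\widetilde\Gamma_2(f)=\Gamma_2(f)-\Gamma\big(f,\frac{\Gamma(f)}{f}\big)$.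 A positive solution of the heat equation on a set $U\subset V$ is a function $u:V\times[0,\infty)\to(0,\infty)$, continuously differentiable in $t$, with $\partial_t u(x,t)=\Delta u(\cdot,t)(x)$ for all $x\in U$, $t\ge 0$; here $\sqrt u$, $\Gamma(\sqrt u)$ etc. are taken at each fixed time. *)

theory Defs
  imports "HOL-Analysis.Analysis"
begin

text \<open>Weighted graph on the vertex type 'a (V = UNIV), edge relation E,
  edge weights w (possibly non-symmetric), vertex measure mu.\<close>

definition weighted_graph :: "('a \<Rightarrow> 'a \<Rightarrow> bool) \<Rightarrow> ('a \<Rightarrow> 'a \<Rightarrow> real) \<Rightarrow> ('a \<Rightarrow> real) \<Rightarrow> bool" where
  "weighted_graph E w mu \<longleftrightarrow>
     (\<forall>x y. E x y \<longrightarrow> E y x) \<and> (\<forall>x. \<not> E x x) \<and>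
     (\<forall>x y. E\<^sup>*\<^sup>* x y) \<and>
     (\<forall>x. finite {y. E x y}) \<and>
     (\<forall>x y. E x y \<longrightarrow> w x y > 0) \<and>
     (\<forall>x. mu x > 0)"

definition gdeg :: "('a \<Rightarrow> 'a \<Rightarrow> bool) \<Rightarrow> ('a \<Rightarrow> 'a \<Rightarrow> real) \<Rightarrow> 'a \<Rightarrow> real" where
  "gdeg E w x = (\<Sum>y\<in>{y. E x y}. w x y)"

definition D_mu :: "('a \<Rightarrow> 'a \<Rightarrow> bool) \<Rightarrow> ('a \<Rightarrow> 'a \<Rightarrow> real) \<Rightarrow> ('a \<Rightarrow> real) \<Rightarrow> real" where
  "D_mu E w mu = (SUP x. gdeg E w x / mu x)"

definition D_w :: "('a \<Rightarrow> 'a \<Rightarrow> bool) \<Rightarrow> ('a \<Rightarrow> 'a \<Rightarrow> real) \<Rightarrow> real" where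
  "D_w E w = (SUP p\<in>{(x,y). E x y}. gdeg E w (fst p) / w (fst p) (snd p))"

definition D_mu_finite :: "('a \<Rightarrow> 'a \<Rightarrow> bool) \<Rightarrow> ('a \<Rightarrow> 'a \<Rightarrow> real) \<Rightarrow> ('a \<Rightarrow> real) \<Rightarrow> bool" where
  "D_mu_finite E w mu \<longleftrightarrow> bdd_above (range (\<lambda>x. gdeg E w x / mu x))"

definition D_w_finite :: "('a \<Rightarrow> 'a \<Rightarrow> bool) \<Rightarrow> ('a \<Rightarrow> 'a \<Rightarrow> real) \<Rightarrow> bool" where
  "D_w_finite E w \<longleftrightarrow> bdd_above ((\<lambda>p. gdeg E w (fst p) / w (fst p) (snd p)) ` {(x,y). E x y})"

definition glap :: "('a \<Rightarrow> 'a \<Rightarrow> bool) \<Rightarrow> ('a \<Rightarrow> 'a \<Rightarrow> real) \<Rightarrow> ('a \<Rightarrow> real) \<Rightarrow> ('a \<Rightarrow> real) \<Rightarrow> 'a \<Rightarrow> real" where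
  "glap E w mu f x = (1 / mu x) * (\<Sum>y\<in>{y. E x y}. w x y * (f y - f x))"

definition gGamma :: "('a \<Rightarrow> 'a \<Rightarrow> bool) \<Rightarrow> ('a \<Rightarrow> 'a \<Rightarrow> real) \<Rightarrow> ('a \<Rightarrow> real) \<Rightarrow> ('a \<Rightarrow> real) \<Rightarrow> ('a \<Rightarrow> real) \<Rightarrow> 'a \<Rightarrow> real" where
  "gGamma E w mu f g x =
     (glap E w mu (\<lambda>z. f z * g z) x - f x * glap E w mu g x - g x * glap E w mu f x) / 2"

definition gGamma2 :: "('a \<Rightarrow> 'a \<Rightarrow> bool) \<Rightarrow> ('a \<Rightarrow> 'a \<Rightarrow> real) \<Rightarrow> ('a \<Rightarrow> real) \<Rightarrow> ('a \<Rightarrow> real) \<Rightarrow> ('a \<Rightarrow> real) \<Rightarrow> 'a \<Rightarrow> real" where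
  "gGamma2 E w mu f g x =
     (glap E w mu (gGamma E w mu f g) x - gGamma E w mu f (glap E w mu g) x
        - gGamma E w mu (glap E w mu f) g x) / 2"

definition gGamma2_tilde :: "('a \<Rightarrow> 'a \<Rightarrow> bool) \<Rightarrow> ('a \<Rightarrow> 'a \<Rightarrow> real) \<Rightarrow> ('a \<Rightarrow> real) \<Rightarrow> ('a \<Rightarrow> real) \<Rightarrow> 'a \<Rightarrow> real" where
  "gGamma2_tilde E w mu f x =
     gGamma2 E w mu f f x - gGamma E w mu f (\<lambda>z. gGamma E w mu f f z / f z) x"

definition CDE :: "('a \<Rightarrow> 'a \<Rightarrow> bool) \<Rightarrow> ('a \<Rightarrow> 'a \<Rightarrow> real) \<Rightarrow> ('a \<Rightarrow> real) \<Rightarrow> real \<Rightarrow> real \<Rightarrow> bool" where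
  "CDE E w mu n K \<longleftrightarrow>
     (\<forall>f :: 'a \<Rightarrow> real. (\<forall>z. f z > 0) \<longrightarrow>
        (\<forall>x. gGamma2_tilde E w mu f x \<ge> (1 / n) * (glap E w mu f x)\<^sup>2 + K * gGamma E w mu f f x))"

definition positive_heat_solution :: "('a \<Rightarrow> 'a \<Rightarrow> bool) \<Rightarrow> ('a \<Rightarrow> 'a \<Rightarrow> real) \<Rightarrow> ('a \<Rightarrow> real) \<Rightarrow> ('a \<Rightarrow> real \<Rightarrow> real) \<Rightarrow> bool" where
  "positive_heat_solution E w mu u \<longleftrightarrow>
     (\<forall>x t. t \<ge> 0 \<longrightarrow> u x t > 0) \<and>
     (\<forall>x t. t \<ge> 0 \<longrightarrow>
        ((\<lambda>s. u x s) has_real_derivative glap E w mu (\<lambda>y. u y t) x) (at t within {0..})) \<and>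
     (\<forall>x. continuous_on {0..} (\<lambda>t. glap E w mu (\<lambda>y. u y t) x))"

end

theory Submission
  imports Defs
begin


lemma glap_add: "glap E w mu (\<lambda>z. a z + b z) x = glap E w mu a x + glap E w mu b x"
proof -
  have "(\<Sum>y\<in>{y. E x y}. w x y * (a y + b y - (a x + b x))) = (\<Sum>y\<in>{y. E x y}. w x y * (a y - a x)) + (\<Sum>y\<in>{y. E x y}. w x y * (b y - b x))"
    by (simp add: sum.distrib[symmetric] algebra_simps)
  thus ?thesis unfolding glap_def by (simp add: algebra_simps)
qed

lemma key_ineq:
  fixes f fp :: "'a \<Rightarrow> real"
  assumes fpos: "\<forall>z. f z > 0" and mupos: "mu x > 0" and wpos: "\<forall>y. E x y \<longrightarrow> w x y > 0"
   and cde: "gGamma2_tilde E w mu f x \<ge> (1/n) * (glap E w mu f x)\<^sup>2 + (-K) * gGamma E w mu f f x"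
   and nb: "\<forall>y. E x y \<longrightarrow> - glap E w mu f y / f y \<le> - glap E w mu f x / f x + \<delta>"
   and fp: "\<forall>z. fp z = glap E w mu f z + gGamma E w mu f f z / f z"
   and t: "t \<ge> 0" and n: "n > 0"
  shows "- glap E w mu f x / f x - t * glap E w mu fp x / f x + t * glap E w mu f x * fp x / (f x)\<^sup>2
     \<le> - glap E w mu f x / f x - 2*t*(glap E w mu f x)\<^sup>2/(n * (f x)\<^sup>2) + 2*t*K*gGamma E w mu f f x/(f x)\<^sup>2
        + t*\<delta>*((1/mu x)*(\<Sum>y\<in>{y. E x y}. w x y * (f y)\<^sup>2))/(f x)\<^sup>2"
proof -
  define L where "L = glap E w mu f"
  define G where "G = (\<lambda>z. gGamma E w mu f f z)"
  define R where "R = (\<lambda>z. G z / f z)"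
  define S where "S = (1/mu x)*(\<Sum>y\<in>{y. E x y}. w x y * (f y)\<^sup>2)"
  define P where "P = glap E w mu (\<lambda>z. f z * L z) x"
  define Q where "Q = glap E w mu fp x"
  have fR: "(\<lambda>z. f z * R z) = G"
  proof (rule ext)
    fix z have "f z \<noteq> 0" using fpos by (metis less_irrefl)
    thus "f z * R z = G z" by (simp add: R_def)
  qed
  have LF: "(\<lambda>z. L z * f z) = (\<lambda>z. f z * L z)" by (auto intro!: ext)
  have g1: "gGamma E w mu f L x = (P - f x * glap E w mu L x - L x * L x)/2"
    unfolding gGamma_def P_def L_def by simp
  have g2: "gGamma E w mu L f x = (P - L x * L x - f x * glap E w mu L x)/2"
    unfolding gGamma_def P_def using LF by (simp add: L_def)
  have g3: "gGamma E w mu f R x = (glap E w mu G x - f x * glap E w mu R x - R x * L x)/2"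
    unfolding gGamma_def using fR by (simp add: L_def)
  have g4: "gGamma2 E w mu f f x = (glap E w mu G x - gGamma E w mu f L x - gGamma E w mu L f x)/2"
    unfolding gGamma2_def G_def L_def by simp
  have g5: "gGamma2_tilde E w mu f x = gGamma2 E w mu f f x - gGamma E w mu f R x"
    unfolding gGamma2_tilde_def R_def G_def by simp
  have I1: "2 * gGamma2_tilde E w mu f x = - P + f x * glap E w mu L x + (L x)\<^sup>2 + f x * glap E w mu R x + R x * L x"
    using g1 g2 g3 g4 g5 by (simp add: power2_eq_square algebra_simps)
  have fpe: "fp = (\<lambda>z. L z + R z)" using fp by (auto simp: L_def R_def G_def)
  have QE: "Q = glap E w mu L x + glap E w mu R x" unfolding Q_def fpe by (rule glap_add)
  have Gx: "glap E w mu (\<lambda>z. f z * f z) x = 2 * f x * L x + 2 * G x"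
    unfolding G_def gGamma_def L_def by (simp add: field_simps)
  have Pb: "P \<ge> (L x / f x) * glap E w mu (\<lambda>z. f z * f z) x - \<delta> * S"
  proof -
    have tm: "w x y * (f y * L y - f x * L x) \<ge> w x y * ((L x / f x) * (f y * f y - f x * f x) - \<delta> * (f y)\<^sup>2)"
      if "y \<in> {y. E x y}" for y
    proof -
      have e: "E x y" using that by simp
      have "- L y / f y \<le> - L x / f x + \<delta>" using nb e by (simp add: L_def)
      hence "L y \<ge> f y * (L x / f x - \<delta>)" using fpos[rule_format, of y]
        by (simp add: field_simps)
      hence "f y * L y \<ge> f y * (f y * (L x / f x - \<delta>))" using fpos[rule_format, of y]
        by (simp add: mult_left_mono)
      moreover have "f x * L x = (L x / f x) * (f x * f x)" using fpos[rule_format, of x] by simp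
      ultimately have "f y * L y - f x * L x \<ge> (L x / f x) * (f y * f y - f x * f x) - \<delta> * (f y)\<^sup>2"
        by (simp add: algebra_simps power2_eq_square)
      thus ?thesis using wpos e by (simp add: mult_left_mono)
    qed
    have "(\<Sum>y\<in>{y. E x y}. w x y * ((L x / f x) * (f y * f y - f x * f x) - \<delta> * (f y)\<^sup>2))
          \<le> (\<Sum>y\<in>{y. E x y}. w x y * (f y * L y - f x * L x))"
      by (rule sum_mono) (use tm in auto)
    hence "(1/mu x) * (\<Sum>y\<in>{y. E x y}. w x y * ((L x / f x) * (f y * f y - f x * f x) - \<delta> * (f y)\<^sup>2))
          \<le> (1/mu x) * (\<Sum>y\<in>{y. E x y}. w x y * (f y * L y - f x * L x))"
      using mupos by (intro mult_left_mono) auto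
    moreover have "(1/mu x) * (\<Sum>y\<in>{y. E x y}. w x y * ((L x / f x) * (f y * f y - f x * f x) - \<delta> * (f y)\<^sup>2))
       = (L x / f x) * glap E w mu (\<lambda>z. f z * f z) x - \<delta> * S"
      unfolding glap_def S_def
      by (simp add: algebra_simps sum_distrib_left sum_subtractf sum.distrib)
    moreover have "P = (1/mu x) * (\<Sum>y\<in>{y. E x y}. w x y * (f y * L y - f x * L x))"
      unfolding P_def glap_def by simp
    ultimately show ?thesis by linarith
  qed
  have Rx: "R x = G x / f x" by (simp add: R_def)
  have c: "gGamma2_tilde E w mu f x \<ge> (L x)\<^sup>2 / n - K * G x" using cde by (simp add: L_def G_def)
  have fx: "f x > 0" using fpos by simp
  have h2: "(L x / f x) * (2 * f x * L x + 2 * G x) = 2 * (L x)\<^sup>2 + 2 * L x * G x / f x"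
    using fx by (simp add: field_simps power2_eq_square)
  have h1: "f x * Q \<ge> 2*(L x)\<^sup>2/n - 2*K*G x + (L x)\<^sup>2 + L x * G x / f x - \<delta> * S"
  proof -
    have p1: "P \<ge> 2 * (L x)\<^sup>2 + 2 * L x * G x / f x - \<delta> * S" using Pb Gx h2 by simp
    have p2: "f x * Q = 2 * gGamma2_tilde E w mu f x + P - (L x)\<^sup>2 - L x * G x / f x"
      using I1 QE Rx by (simp add: algebra_simps)
    have p3: "2 * gGamma2_tilde E w mu f x \<ge> 2*(L x)\<^sup>2 / n - 2 * K * G x" using c by linarith
    show ?thesis using p1 p2 p3 by linarith
  qed
  have h3: "- f x * Q + (L x)\<^sup>2 + L x * G x / f x \<le> -2*(L x)\<^sup>2/n + 2*K*G x + \<delta> * S" using h1 by linarith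
  have h4: "t / (f x)\<^sup>2 * (- f x * Q + (L x)\<^sup>2 + L x * G x / f x) \<le> t / (f x)\<^sup>2 * (-2*(L x)\<^sup>2/n + 2*K*G x + \<delta> * S)"
    using h3 t by (intro mult_left_mono) auto
  have fpx: "fp x = L x + G x / f x" using fpe by (simp add: R_def)
  have e1: "- L x / f x - t * Q / f x + t * L x * fp x / (f x)\<^sup>2 = - L x / f x + t / (f x)\<^sup>2 * (- f x * Q + (L x)\<^sup>2 + L x * G x / f x)"
    unfolding fpx using fx by (simp add: field_simps power2_eq_square)
  have e2: "- L x / f x - 2*t*(L x)\<^sup>2/(n * (f x)\<^sup>2) + 2*t*K*G x/(f x)\<^sup>2 + t*\<delta>*S/(f x)\<^sup>2
      = - L x / f x + t / (f x)\<^sup>2 * (-2*(L x)\<^sup>2/n + 2*K*G x + \<delta> * S)"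
    using fx n by (simp add: field_simps power2_eq_square)
  show ?thesis using h4 e1 e2 unfolding L_def G_def S_def Q_def by simp
qed


lemma gGamma_self: "gGamma E w mu f f x = (1/(2*mu x)) * (\<Sum>y\<in>{y. E x y}. w x y * (f y - f x)\<^sup>2)"
proof -
  have "(\<Sum>y\<in>{y. E x y}. w x y * (f y * f y - f x * f x)) - 2 * f x * (\<Sum>y\<in>{y. E x y}. w x y * (f y - f x))
     = (\<Sum>y\<in>{y. E x y}. w x y * (f y - f x)\<^sup>2)"
    by (simp add: sum_distrib_left sum_subtractf[symmetric] power2_eq_square algebra_simps)
  moreover have "gGamma E w mu f f x = ((1/mu x) * (\<Sum>y\<in>{y. E x y}. w x y * (f y * f y - f x * f x)) - 2 * f x * ((1/mu x) * (\<Sum>y\<in>{y. E x y}. w x y * (f y - f x))))/2"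
    unfolding gGamma_def glap_def by simp
  ultimately show ?thesis by (simp add: diff_divide_distrib[symmetric] right_diff_distrib[symmetric])
qed

lemma bound_g:
  assumes fpos: "\<forall>z. f z > 0" and mupos: "mu x > 0" and wpos: "\<forall>y. E x y \<longrightarrow> w x y > 0"
    and Dm: "gdeg E w x / mu x \<le> Dm"
  shows "- glap E w mu f x / f x \<le> Dm"
proof -
  have "(\<Sum>y\<in>{y. E x y}. w x y * (f x - f y)) \<le> (\<Sum>y\<in>{y. E x y}. w x y * f x)"
    by (rule sum_mono) (use fpos wpos in \<open>auto intro!: mult_left_mono simp: less_imp_le\<close>)
  hence le: "(\<Sum>y\<in>{y. E x y}. w x y * (f x - f y)) \<le> gdeg E w x * f x"
    unfolding gdeg_def by (simp add: sum_distrib_right)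
  have pos: "0 \<le> mu x * f x" using fpos mupos by (simp add: less_imp_le)
  have eqn: "- glap E w mu f x / f x = (\<Sum>y\<in>{y. E x y}. w x y * (f x - f y)) / (mu x * f x)"
  proof -
    have h: "- (\<Sum>y\<in>{y. E x y}. w x y * (f y - f x)) = (\<Sum>y\<in>{y. E x y}. w x y * (f x - f y))"
      by (simp add: sum_negf[symmetric] algebra_simps)
    have "- glap E w mu f x / f x = (- (\<Sum>y\<in>{y. E x y}. w x y * (f y - f x))) / (mu x * f x)"
      unfolding glap_def by simp
    thus ?thesis using h by simp
  qed
  have "- glap E w mu f x / f x \<le> gdeg E w x * f x / (mu x * f x)"
    unfolding eqn by (rule divide_right_mono[OF le pos])
  also have "\<dots> = gdeg E w x / mu x" using fpos[rule_format, of x] by simp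
  finally show ?thesis using Dm by linarith
qed

lemma bounds_GS:
  assumes fpos: "\<forall>z. f z > 0" and mupos: "mu x > 0" and wpos: "\<forall>y. E x y \<longrightarrow> w x y > 0"
    and fin: "finite {y. E x y}"
    and Dm: "gdeg E w x / mu x \<le> Dm"
    and Dw: "\<forall>y. E x y \<longrightarrow> gdeg E w x / w x y \<le> Dw" and Dw0: "Dw \<ge> 0"
    and Lneg: "glap E w mu f x \<le> 0"
  shows "gGamma E w mu f f x / (f x)\<^sup>2 \<le> Dm * (Dw + 1) / 2"
    and "(1/mu x) * (\<Sum>y\<in>{y. E x y}. w x y * (f y)\<^sup>2) / (f x)\<^sup>2 \<le> Dm * (1 + Dw)\<^sup>2"
proof -
  define N where "N = {y. E x y}"
  define d where "d = (\<lambda>y. f y - f x)"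
  define Pp where "Pp = (\<Sum>y\<in>N. w x y * max (d y) 0)"
  define Mm where "Mm = (\<Sum>y\<in>N. w x y * max (- d y) 0)"
  have fx: "f x > 0" using fpos by simp
  have s0: "(\<Sum>y\<in>N. w x y * d y) \<le> 0"
  proof -
    have "glap E w mu f x = (1/mu x) * (\<Sum>y\<in>N. w x y * d y)" unfolding glap_def N_def d_def by simp
    thus ?thesis using Lneg mupos by (auto simp: divide_le_0_iff)
  qed
  have dsplit: "(\<Sum>y\<in>N. w x y * d y) = Pp - Mm"
    unfolding Pp_def Mm_def sum_subtractf[symmetric]
    by (rule sum.cong) (auto simp: max_def algebra_simps)
  have PM: "Pp \<le> Mm" using s0 dsplit by linarith
  have fx0: "f x > 0" using fpos by simp
  have dneg: "max (- d y) 0 \<le> f x" for y using fpos[rule_format, of y] fx0 by (simp add: d_def max_def)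
  have Mb: "Mm \<le> gdeg E w x * f x"
  proof -
    have "Mm \<le> (\<Sum>y\<in>N. w x y * f x)" unfolding Mm_def
      by (rule sum_mono) (use wpos dneg in \<open>auto simp: N_def intro!: mult_left_mono less_imp_le\<close>)
    thus ?thesis unfolding gdeg_def N_def by (simp add: sum_distrib_right)
  qed
  have Pnn: "w x y * max (d y) 0 \<le> Pp" if "y \<in> N" for y
  proof -
    have "w x y * max (d y) 0 = (\<Sum>z\<in>{y}. w x z * max (d z) 0)" by simp
    also have "\<dots> \<le> Pp" unfolding Pp_def
      by (rule sum_mono2) (use fin that wpos in \<open>auto simp: N_def\<close>)
    finally show ?thesis .
  qed
  have dpos: "max (d y) 0 \<le> Dw * f x" if "y \<in> N" for y
  proof -
    have wy: "w x y > 0" using that wpos by (simp add: N_def)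
    have "w x y * max (d y) 0 \<le> gdeg E w x * f x" using Pnn[OF that] PM Mb by linarith
    hence "max (d y) 0 \<le> gdeg E w x * f x / w x y" using wy by (metis pos_le_divide_eq mult.commute)
    also have "\<dots> = (gdeg E w x / w x y) * f x" by simp
    also have "\<dots> \<le> Dw * f x" using Dw that fx by (intro mult_right_mono) (auto simp: N_def)
    finally show ?thesis .
  qed
  have tm: "w x y * (d y)\<^sup>2 \<le> f x * (Dw * (w x y * max (d y) 0) + w x y * max (- d y) 0)" if "y \<in> N" for y
  proof -
    have wy: "w x y > 0" using that wpos by (simp add: N_def)
    have "(d y)\<^sup>2 \<le> f x * (Dw * max (d y) 0 + max (- d y) 0)"
    proof (cases "d y \<ge> 0")
      case True
      have "(d y)\<^sup>2 = d y * d y" by (simp add: power2_eq_square)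
      also have "\<dots> \<le> (Dw * f x) * d y" using dpos[OF that] True by (intro mult_right_mono) auto
      finally show ?thesis using True by (simp add: algebra_simps)
    next
      case False
      have "(d y)\<^sup>2 = (- d y) * (- d y)" by (simp add: power2_eq_square)
      also have "\<dots> \<le> f x * (- d y)" using dneg[of y] False by (intro mult_right_mono) auto
      finally show ?thesis using False by (simp add: algebra_simps)
    qed
    hence "w x y * (d y)\<^sup>2 \<le> w x y * (f x * (Dw * max (d y) 0 + max (- d y) 0))"
      using wy by (intro mult_left_mono) auto
    thus ?thesis by (simp add: algebra_simps)
  qed
  have sq: "(\<Sum>y\<in>N. w x y * (d y)\<^sup>2) \<le> f x * (Dw * Pp + Mm)"
  proof -
    have "(\<Sum>y\<in>N. w x y * (d y)\<^sup>2) \<le> (\<Sum>y\<in>N. f x * (Dw * (w x y * max (d y) 0) + w x y * max (- d y) 0))"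
      by (rule sum_mono) (use tm in auto)
    also have "\<dots> = (\<Sum>y\<in>N. f x * (Dw * (w x y * max (d y) 0))) + (\<Sum>y\<in>N. f x * (w x y * max (- d y) 0))"
      by (simp add: distrib_left sum.distrib)
    also have "\<dots> = f x * (Dw * Pp + Mm)" unfolding Pp_def Mm_def
      by (simp add: sum_distrib_left[symmetric] distrib_left)
    finally show ?thesis .
  qed
  have "Dw * Pp + Mm \<le> (Dw + 1) * Mm" using PM Dw0 by (simp add: algebra_simps mult_left_mono)
  also have "\<dots> \<le> (Dw + 1) * (gdeg E w x * f x)" using Mb Dw0 by (intro mult_left_mono) auto
  finally have "f x * (Dw * Pp + Mm) \<le> f x * ((Dw + 1) * (gdeg E w x * f x))"
    using fx by (intro mult_left_mono) auto
  hence sq2: "(\<Sum>y\<in>N. w x y * (d y)\<^sup>2) \<le> (Dw + 1) * gdeg E w x * (f x)\<^sup>2"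
    using sq by (simp add: power2_eq_square mult_ac)
  have "gGamma E w mu f f x / (f x)\<^sup>2 = (\<Sum>y\<in>N. w x y * (d y)\<^sup>2) / (2 * mu x * (f x)\<^sup>2)"
    unfolding gGamma_self N_def d_def by simp
  also have "\<dots> \<le> (Dw + 1) * gdeg E w x * (f x)\<^sup>2 / (2 * mu x * (f x)\<^sup>2)"
    using sq2 mupos fx by (intro divide_right_mono) auto
  also have "\<dots> = (Dw + 1) * (gdeg E w x / mu x) / 2" using fx mupos by (simp add: field_simps)
  also have "\<dots> \<le> (Dw + 1) * Dm / 2" using Dm Dw0 by (intro divide_right_mono mult_left_mono) auto
  finally show "gGamma E w mu f f x / (f x)\<^sup>2 \<le> Dm * (Dw + 1) / 2" by (simp add: algebra_simps)
  have fy: "(f y)\<^sup>2 \<le> (1 + Dw)\<^sup>2 * (f x)\<^sup>2" if "y \<in> N" for y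
  proof -
    have "d y \<le> Dw * f x" using dpos[OF that] max.cobounded1 order_trans by blast
    hence "f y \<le> (1 + Dw) * f x" by (simp add: d_def algebra_simps)
    hence "(f y)\<^sup>2 \<le> ((1 + Dw) * f x)\<^sup>2" using fpos[rule_format, of y] by (intro power_mono) auto
    thus ?thesis by (simp add: power_mult_distrib)
  qed
  have "(\<Sum>y\<in>N. w x y * (f y)\<^sup>2) \<le> (\<Sum>y\<in>N. w x y * ((1 + Dw)\<^sup>2 * (f x)\<^sup>2))"
    by (rule sum_mono) (use fy wpos in \<open>auto simp: N_def intro!: mult_left_mono less_imp_le\<close>)
  also have "\<dots> = gdeg E w x * ((1 + Dw)\<^sup>2 * (f x)\<^sup>2)" unfolding gdeg_def N_def by (simp add: sum_distrib_right)
  finally have s2: "(\<Sum>y\<in>N. w x y * (f y)\<^sup>2) \<le> gdeg E w x * ((1 + Dw)\<^sup>2 * (f x)\<^sup>2)" .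
  have "(1/mu x) * (\<Sum>y\<in>N. w x y * (f y)\<^sup>2) / (f x)\<^sup>2 \<le> (1/mu x) * (gdeg E w x * ((1 + Dw)\<^sup>2 * (f x)\<^sup>2)) / (f x)\<^sup>2"
    using s2 mupos fx by (intro divide_right_mono mult_left_mono) auto
  also have "\<dots> = (gdeg E w x / mu x) * (1 + Dw)\<^sup>2" using fx mupos by (simp add: field_simps)
  also have "\<dots> \<le> Dm * (1 + Dw)\<^sup>2" using Dm by (intro mult_right_mono) auto
  finally show "(1/mu x) * (\<Sum>y\<in>{y. E x y}. w x y * (f y)\<^sup>2) / (f x)\<^sup>2 \<le> Dm * (1 + Dw)\<^sup>2" by (simp add: N_def)
qed


definition gdist :: "('a \<Rightarrow> 'a \<Rightarrow> bool) \<Rightarrow> 'a \<Rightarrow> 'a \<Rightarrow> nat" where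
  "gdist E v0 x = (LEAST k. (E ^^ k) v0 x)"

lemma gdist_ex: assumes "weighted_graph E w mu" shows "(E ^^ gdist E v0 x) v0 x"
proof -
  have "E\<^sup>*\<^sup>* v0 x" using assms unfolding weighted_graph_def by simp
  then obtain k where "(E ^^ k) v0 x" using rtranclp_imp_relpowp by metis
  thus ?thesis unfolding gdist_def by (rule LeastI)
qed

lemma gdist_0: "gdist E v0 v0 = 0"
  unfolding gdist_def by (rule Least_eq_0) simp

lemma gdist_step: assumes "weighted_graph E w mu" "E x y" shows "gdist E v0 y \<le> gdist E v0 x + 1"
proof -
  have "(E ^^ gdist E v0 x) v0 x" by (rule gdist_ex[OF assms(1)])
  hence "(E ^^ Suc (gdist E v0 x)) v0 y" using assms(2) by (rule relpowp_Suc_I)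
  hence "gdist E v0 y \<le> Suc (gdist E v0 x)" unfolding gdist_def by (rule Least_le)
  thus ?thesis by simp
qed

lemma relpow_finite: fixes E :: "'a \<Rightarrow> 'a \<Rightarrow> bool" and v0 :: 'a assumes "\<forall>x. finite {y. E x y}" shows "finite {x. (E ^^ k) v0 x}"
proof (induction k)
  case 0
  have "{x. (E ^^ 0) v0 x} \<subseteq> {v0}" by (auto elim: relpowp_0_E)
  then show ?case using finite_subset by blast
next
  case (Suc k)
  have "{x. (E ^^ Suc k) v0 x} \<subseteq> (\<Union>y\<in>{x. (E ^^ k) v0 x}. {z. E y z})" by (blast elim: relpowp_Suc_E)
  moreover have "finite (\<Union>y\<in>{x. (E ^^ k) v0 x}. {z. E y z})" using Suc assms by (intro finite_UN_I) auto
  ultimately show ?case by (rule finite_subset)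
qed

lemma gdist_ball_finite: assumes "weighted_graph E w mu"
  shows "finite {x. gdist E v0 x \<le> N}"
proof -
  have fin: "\<forall>x. finite {y. E x y}" using assms unfolding weighted_graph_def by blast
  have "{x. gdist E v0 x \<le> N} \<subseteq> (\<Union>k\<in>{..N}. {x. (E ^^ k) v0 x})"
  proof
    fix x assume "x \<in> {x. gdist E v0 x \<le> N}"
    hence "gdist E v0 x \<in> {..N}" by simp
    moreover have "x \<in> {x. (E ^^ gdist E v0 x) v0 x}" using gdist_ex[OF assms] by simp
    ultimately show "x \<in> (\<Union>k\<in>{..N}. {x. (E ^^ k) v0 x})" by blast
  qed
  moreover have "finite (\<Union>k\<in>{..N}. {x. (E ^^ k) v0 x})"
    by (rule finite_UN_I) (simp, rule relpow_finite[OF fin])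
  ultimately show ?thesis by (rule finite_subset)
qed


lemma glap_has_deriv:
  assumes "\<And>y. ((\<lambda>s. F y s) has_real_derivative F' y) (at t within S)"
  shows "((\<lambda>s. glap E w mu (\<lambda>y. F y s) x) has_real_derivative glap E w mu F' x) (at t within S)"
proof -
  have "((\<lambda>s. (1 / mu x) * (\<Sum>y\<in>{y. E x y}. w x y * (F y s - F x s))) has_real_derivative
         (1 / mu x) * (\<Sum>y\<in>{y. E x y}. w x y * (F' y - F' x))) (at t within S)"
    apply (rule DERIV_cmult)
    apply (rule DERIV_sum)
    apply (rule DERIV_cmult)
    apply (rule DERIV_diff)
     apply (rule assms)+
    done
  thus ?thesis unfolding glap_def .
qed

lemma sqrt_has_deriv:
  assumes "(g has_real_derivative D) (at s within S)" "g s > 0"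
  shows "((\<lambda>s. sqrt (g s)) has_real_derivative D / (2 * sqrt (g s))) (at s within S)"
proof -
  have "((\<lambda>s. sqrt (g s)) has_real_derivative (inverse (sqrt (g s)) / 2) * D) (at s within S)"
    by (rule DERIV_chain2[OF DERIV_real_sqrt[OF assms(2)] assms(1)])
  thus ?thesis by (simp add: field_simps)
qed

lemma H_has_deriv:
  assumes "(L has_real_derivative L') (at s within S)" "(f has_real_derivative f') (at s within S)" "f s \<noteq> 0"
  shows "((\<lambda>r. - r * L r / f r) has_real_derivative (- L s / f s - s * L' / f s + s * L s * f' / (f s)\<^sup>2)) (at s within S)"
  using assms
  apply -
  apply (rule derivative_eq_intros | assumption | simp)+
  apply (simp add: field_simps power2_eq_square)
  done



lemma quad_bound:
  fixes H n c :: real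
  assumes n: "n > 0" and c: "c \<ge> 0" and h: "2 * H\<^sup>2 / n \<le> H + c"
  shows "H \<le> n / 2 + sqrt (n * c / 2)"
proof (rule ccontr)
  assume "\<not> ?thesis"
  hence gt: "H > n/2 + sqrt (n * c / 2)" by simp
  define r where "r = sqrt (n * c / 2)"
  have r0: "r \<ge> 0" using n c by (simp add: r_def)
  have r2: "r\<^sup>2 = n * c / 2" using n c by (simp add: r_def)
  define m where "m = n/2 + r"
  have Hm: "H > m" using gt by (simp add: m_def r_def)
  have "H * (2 * H / n - 1) - m * (2 * m / n - 1) = (H - m) * (2 * (H + m) / n - 1)"
    using n by (simp add: field_simps power2_eq_square)
  moreover have "2 * (H + m) / n - 1 > 0"
  proof -
    have "H + m > n" using Hm r0 by (simp add: m_def)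
    hence "2 * (H + m) / n > 2" using n by (simp add: field_simps)
    thus ?thesis by simp
  qed
  ultimately have "H * (2 * H / n - 1) > m * (2 * m / n - 1)" using Hm
    by (smt (verit) mult_pos_pos)
  moreover have "m * (2 * m / n - 1) = r + c"
  proof -
    have "m * (2 * m / n - 1) = (n/2 + r) * (2 * r / n)" using n by (simp add: m_def field_simps)
    also have "\<dots> = r + 2 * r\<^sup>2 / n" using n by (simp add: field_simps power2_eq_square)
    also have "\<dots> = r + c" using r2 n by (simp add: field_simps)
    finally show ?thesis .
  qed
  moreover have "H * (2 * H / n - 1) = 2 * H\<^sup>2 / n - H" using n by (simp add: field_simps power2_eq_square)
  ultimately show False using h r0 by linarith
qed

lemma eps_bound:
  fixes a C c :: real
  assumes c: "c \<ge> 0" and h: "\<And>\<epsilon>. \<epsilon> > 0 \<Longrightarrow> a \<le> C + c * sqrt \<epsilon>"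
  shows "a \<le> C"
proof (rule ccontr)
  assume "\<not> a \<le> C"
  hence d: "a - C > 0" by simp
  define \<epsilon> where "\<epsilon> = ((a - C) / (2 * c + 1))\<^sup>2"
  have e: "\<epsilon> > 0" using d c by (simp add: \<epsilon>_def)
  have "sqrt \<epsilon> = (a - C) / (2 * c + 1)" using d c by (simp add: \<epsilon>_def)
  hence "c * sqrt \<epsilon> = c * (a - C) / (2 * c + 1)" by simp
  also have "\<dots> < (a - C)"
  proof -
    have p: "c * (a - C) \<ge> 0" using c d by simp
    have q: "(a - C) * (2 * c + 1) = 2 * (c * (a - C)) + (a - C)" by (simp add: algebra_simps)
    have "c * (a - C) < (a - C) * (2 * c + 1)" using p q d by linarith
    thus ?thesis using c by (simp add: pos_divide_less_eq)
  qed
  finally show False using h[OF e] by linarith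
qed

lemma sqrt_split:
  fixes n K A t \<epsilon> B :: real
  assumes "n \<ge> 0" "K \<ge> 0" "A \<ge> 0" "t \<ge> 0" "\<epsilon> \<ge> 0" "B \<ge> 0"
  shows "sqrt (n * (2 * t\<^sup>2 * K * A + t * \<epsilon> * B) / 2) \<le> t * sqrt (n * K * A) + sqrt (n * t * B / 2) * sqrt \<epsilon>"
proof -
  have "sqrt (n * (2 * t\<^sup>2 * K * A + t * \<epsilon> * B) / 2) = sqrt (t\<^sup>2 * (n * K * A) + (n * t * B / 2) * \<epsilon>)"
    by (simp add: algebra_simps)
  also have "\<dots> \<le> sqrt (t\<^sup>2 * (n * K * A)) + sqrt ((n * t * B / 2) * \<epsilon>)"
    by (rule sqrt_add_le_add_sqrt) (use assms in auto)
  also have "\<dots> = t * sqrt (n * K * A) + sqrt (n * t * B / 2) * sqrt \<epsilon>"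
  proof -
    have "sqrt (t\<^sup>2 * (n * K * A)) = t * sqrt (n * K * A)" using assms by (simp add: real_sqrt_mult)
    moreover have "sqrt ((n * t * B / 2) * \<epsilon>) = sqrt (n * t * B / 2) * sqrt \<epsilon>" by (rule real_sqrt_mult)
    ultimately show ?thesis by simp
  qed
  finally show ?thesis .
qed


theorem mainTheorem3:
  fixes E :: "'a \<Rightarrow> 'a \<Rightarrow> bool" and w :: "'a \<Rightarrow> 'a \<Rightarrow> real" and mu :: "'a \<Rightarrow> real"
    and n K :: real and u :: "'a \<Rightarrow> real \<Rightarrow> real"
  assumes "weighted_graph E w mu"
    and "infinite (UNIV :: 'a set)"
    and "n > 0" and "K > 0"
    and "CDE E w mu n (- K)"
    and "D_mu_finite E w mu" and "D_w_finite E w"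
    and "positive_heat_solution E w mu u"
    and "t > 0"
  shows "gGamma E w mu (\<lambda>y. sqrt (u y t)) (\<lambda>y. sqrt (u y t)) x / u x t
           - deriv (\<lambda>s. sqrt (u x s)) t / sqrt (u x t)
         \<le> n / (2 * t) + sqrt (n * K * D_mu E w mu * (D_w E w + 1) / 2)"
proof -
  note wg = assms(1) and inf = assms(2) and n0 = assms(3) and K0 = assms(4) and cde = assms(5)
    and dmf = assms(6) and dwf = assms(7) and heat = assms(8) and t0 = assms(9)
  define Dm where "Dm = D_mu E w mu"
  define Dw where "Dw = D_w E w"
  have mupos: "\<forall>z. mu z > 0" and wpos: "\<forall>a b. E a b \<longrightarrow> w a b > 0" and fin: "\<forall>z. finite {y. E z y}"
    using wg unfolding weighted_graph_def by auto
  have Dm_ge: "gdeg E w z / mu z \<le> Dm" for z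
    unfolding Dm_def D_mu_def using dmf unfolding D_mu_finite_def by (intro cSUP_upper) auto
  have Dw_ge: "gdeg E w a / w a b \<le> Dw" if "E a b" for a b
  proof -
    have "(\<lambda>p. gdeg E w (fst p) / w (fst p) (snd p)) (a, b) \<le> (SUP p\<in>{(x,y). E x y}. gdeg E w (fst p) / w (fst p) (snd p))"
      using dwf that unfolding D_w_finite_def by (intro cSUP_upper) auto
    thus ?thesis unfolding Dw_def D_w_def by simp
  qed
  have gdeg_nn: "gdeg E w z \<ge> 0" for z
    unfolding gdeg_def using wpos by (intro sum_nonneg) (auto simp: less_imp_le)
  have Dm0: "Dm \<ge> 0" using Dm_ge[of x] gdeg_nn[of x] mupos by (smt (verit) divide_nonneg_pos)
  obtain a b where ab: "E a b"
  proof -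
    obtain c :: 'a where "c \<noteq> x" using inf by (metis UNIV_I finite.emptyI finite_insert insertI1 subsetI subset_antisym)
    moreover have "E\<^sup>*\<^sup>* x c" using wg unfolding weighted_graph_def by simp
    ultimately show ?thesis using that by (metis converse_rtranclpE)
  qed
  have Dw0: "Dw \<ge> 0" using Dw_ge[OF ab] gdeg_nn[of a] wpos ab by (smt (verit) divide_nonneg_pos)
  have upos: "\<And>y s. s \<ge> 0 \<Longrightarrow> u y s > 0"
   and uder: "\<And>y s. s \<ge> 0 \<Longrightarrow> ((\<lambda>s. u y s) has_real_derivative glap E w mu (\<lambda>z. u z s) y) (at s within {0..})"
    using heat unfolding positive_heat_solution_def by auto
  define f where "f = (\<lambda>y s. sqrt (u y s))"
  define fp where "fp = (\<lambda>y s. glap E w mu (\<lambda>z. u z s) y / (2 * f y s))"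
  define L where "L = (\<lambda>z s. glap E w mu (\<lambda>y. f y s) z)"
  define H where "H = (\<lambda>z s. - s * L z s / f z s)"
  have fpos: "\<And>y s. s \<ge> 0 \<Longrightarrow> f y s > 0" using upos by (simp add: f_def)
  have fder: "\<And>y s. s \<ge> 0 \<Longrightarrow> ((\<lambda>s. f y s) has_real_derivative fp y s) (at s within {0..})"
    unfolding f_def fp_def by (rule sqrt_has_deriv[OF uder upos])
  have uff: "\<And>s. s \<ge> 0 \<Longrightarrow> (\<lambda>z. u z s) = (\<lambda>z. f z s * f z s)"
    using upos by (auto intro!: ext simp: f_def less_imp_le)
  have fp_eq: "\<And>z s. s \<ge> 0 \<Longrightarrow> fp z s = L z s + gGamma E w mu (\<lambda>y. f y s) (\<lambda>y. f y s) z / f z s"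
  proof -
    fix z :: 'a and s :: real assume s: "s \<ge> 0"
    have "glap E w mu (\<lambda>z. u z s) z = glap E w mu (\<lambda>z. f z s * f z s) z" using uff[OF s] by simp
    also have "\<dots> = 2 * f z s * L z s + 2 * gGamma E w mu (\<lambda>y. f y s) (\<lambda>y. f y s) z"
      unfolding gGamma_def L_def by (simp add: field_simps)
    finally have e: "glap E w mu (\<lambda>z. u z s) z = 2 * f z s * L z s + 2 * gGamma E w mu (\<lambda>y. f y s) (\<lambda>y. f y s) z" .
    show "fp z s = L z s + gGamma E w mu (\<lambda>y. f y s) (\<lambda>y. f y s) z / f z s"
      unfolding fp_def e using fpos[OF s, of z] by (simp add: field_simps)
  qed
  have Lder: "\<And>z s. s \<ge> 0 \<Longrightarrow> ((\<lambda>s. L z s) has_real_derivative glap E w mu (\<lambda>y. fp y s) z) (at s within {0..})"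
    unfolding L_def by (rule glap_has_deriv, rule fder)
  define Dd where "Dd = (\<lambda>z s. - L z s / f z s - s * glap E w mu (\<lambda>y. fp y s) z / f z s + s * L z s * fp z s / (f z s)\<^sup>2)"
  have Hder: "\<And>z s. s \<ge> 0 \<Longrightarrow> ((\<lambda>r. H z r) has_real_derivative Dd z s) (at s within {0..})"
    unfolding H_def Dd_def
    by (rule H_has_deriv[where L = "\<lambda>r. L z r" and f = "\<lambda>r. f z r" for z, OF Lder fder])
       (use fpos in \<open>(metis less_irrefl)+\<close>)
  have Hcont: "\<And>z. continuous_on {0..t} (\<lambda>r. H z r)"
  proof -
    fix z
    show "continuous_on {0..t} (\<lambda>r. H z r)"
      unfolding continuous_on_eq_continuous_within
    proof
      fix s assume "s \<in> {0..t}"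
      hence "continuous (at s within {0..}) (\<lambda>r. H z r)" using Hder[of s z] DERIV_continuous by auto
      thus "continuous (at s within {0..t}) (\<lambda>r. H z r)" by (rule continuous_within_subset) auto
    qed
  qed
  have gbound: "\<And>z s. s \<ge> 0 \<Longrightarrow> - L z s / f z s \<le> Dm"
    unfolding L_def using mupos wpos Dm_ge fpos
    by (intro bound_g) auto
  have Hbound: "\<And>z s. 0 \<le> s \<Longrightarrow> s \<le> t \<Longrightarrow> H z s \<le> t * Dm"
  proof -
    fix z s assume s: "0 \<le> s" "s \<le> t"
    have "H z s = s * (- L z s / f z s)" by (simp add: H_def)
    also have "\<dots> \<le> s * Dm" using gbound[OF s(1)] s by (intro mult_left_mono) auto
    also have "\<dots> \<le> t * Dm" using s Dm0 by (intro mult_right_mono) auto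
    finally show "H z s \<le> t * Dm" .
  qed
  define A where "A = Dm * (Dw + 1) / 2"
  define B where "B = Dm * (1 + Dw)\<^sup>2"
  have A0: "A \<ge> 0" using Dm0 Dw0 by (simp add: A_def)
  have B0: "B \<ge> 0" using Dm0 by (simp add: B_def)
  have Hx0: "\<And>z. H z 0 = 0" by (simp add: H_def)
  have claim: "H x t \<le> n / 2 + t * sqrt (n * K * A) + sqrt (n * t * B / 2) * sqrt \<epsilon>" if e0: "\<epsilon> > 0" for \<epsilon>
  proof -
    define \<psi> where "\<psi> = (\<lambda>z. real (gdist E x z))"
    define \<Phi> where "\<Phi> = (\<lambda>z s. H z s - \<epsilon> * \<psi> z)"
    define R where "R = nat \<lceil>t * Dm / \<epsilon>\<rceil>"
    define Bl where "Bl = {z. gdist E x z \<le> R}"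
    have finB: "finite Bl" unfolding Bl_def by (rule gdist_ball_finite[OF wg])
    have xB: "x \<in> Bl" unfolding Bl_def by (simp add: gdist_0)
    have psi0: "\<psi> x = 0" by (simp add: \<psi>_def gdist_0)
    have psinn: "\<And>z. \<psi> z \<ge> 0" by (simp add: \<psi>_def)
    have outside: "\<Phi> z s < 0" if "z \<notin> Bl" "0 \<le> s" "s \<le> t" for z s
    proof -
      have "gdist E x z > R" using that(1) by (simp add: Bl_def)
      hence "\<psi> z \<ge> real R + 1" by (simp add: \<psi>_def)
      moreover have "real R \<ge> t * Dm / \<epsilon>" unfolding R_def by (rule real_nat_ceiling_ge)
      ultimately have "\<psi> z > t * Dm / \<epsilon>" by linarith
      hence "\<epsilon> * \<psi> z > t * Dm" using e0 by (simp add: pos_divide_less_eq mult.commute)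
      thus ?thesis using Hbound[OF that(2,3), of z] by (simp add: \<Phi>_def)
    qed
    have attain: "\<forall>z\<in>Bl. \<exists>s\<in>{0..t}. \<forall>r\<in>{0..t}. \<Phi> z r \<le> \<Phi> z s"
    proof
      fix z assume "z \<in> Bl"
      have "continuous_on {0..t} (\<lambda>r. \<Phi> z r)" unfolding \<Phi>_def
        by (intro continuous_on_diff Hcont continuous_on_const)
      thus "\<exists>s\<in>{0..t}. \<forall>r\<in>{0..t}. \<Phi> z r \<le> \<Phi> z s"
        using t0 by (intro continuous_attains_sup) auto
    qed
    hence attain': "\<forall>z\<in>Bl. \<exists>s. s \<in> {0..t} \<and> (\<forall>r\<in>{0..t}. \<Phi> z r \<le> \<Phi> z s)" by blast
    obtain sm where sm0: "\<forall>z\<in>Bl. sm z \<in> {0..t} \<and> (\<forall>r\<in>{0..t}. \<Phi> z r \<le> \<Phi> z (sm z))"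
      using bchoice[OF attain'] by blast
    have sm: "\<And>z. z \<in> Bl \<Longrightarrow> sm z \<in> {0..t} \<and> (\<forall>r\<in>{0..t}. \<Phi> z r \<le> \<Phi> z (sm z))" using sm0 by blast
    define M where "M = Max ((\<lambda>z. \<Phi> z (sm z)) ` Bl)"
    have "M \<in> (\<lambda>z. \<Phi> z (sm z)) ` Bl" unfolding M_def using finB xB by (intro Max_in) auto
    then obtain xs where xs: "xs \<in> Bl" "M = \<Phi> xs (sm xs)" by auto
    have Mge: "\<And>z. z \<in> Bl \<Longrightarrow> \<Phi> z (sm z) \<le> M" unfolding M_def using finB by (intro Max_ge) auto
    define ts where "ts = sm xs"
    have ts: "0 \<le> ts" "ts \<le> t" using sm[OF xs(1)] by (auto simp: ts_def)
    have glob: "\<Phi> z r \<le> \<Phi> xs ts" if "0 \<le> r" "r \<le> t" for z r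
    proof (cases "z \<in> Bl")
      case True
      have "\<Phi> z r \<le> \<Phi> z (sm z)" using sm[OF True] that by auto
      thus ?thesis using Mge[OF True] xs(2) unfolding ts_def by linarith
    next
      case False
      have "\<Phi> x 0 = 0" by (simp add: \<Phi>_def Hx0 psi0)
      moreover have "\<Phi> x 0 \<le> \<Phi> x (sm x)" using sm[OF xB] t0 by auto
      ultimately have "0 \<le> M" using Mge[OF xB] by linarith
      thus ?thesis using outside[OF False that] xs(2) by (simp add: ts_def)
    qed
    define Bd where "Bd = n / 2 + t * sqrt (n * K * A) + sqrt (n * t * B / 2) * sqrt \<epsilon>"
    have Bd0: "Bd \<ge> 0" using n0 K0 A0 B0 t0 e0 by (simp add: Bd_def)
    have Hts: "H xs ts \<le> Bd"
    proof (cases "H xs ts \<le> 0")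
      case True thus ?thesis using Bd0 by linarith
    next
      case False
      hence Hp: "H xs ts > 0" by simp
      have tsp: "ts > 0" using Hp ts Hx0[of xs] by (cases "ts = 0") auto
      define F where "F = (\<lambda>y. f y ts)"
      define g where "g = - L xs ts / f xs ts"
      have Fpos: "\<forall>z. F z > 0" using fpos ts by (simp add: F_def)
      have Hg: "H xs ts = ts * g" by (simp add: H_def g_def)
      have gp: "g > 0" using Hp Hg tsp by (simp add: zero_less_mult_iff)
      have Lneg: "glap E w mu F xs \<le> 0"
      proof -
        have "L xs ts < 0" using gp fpos[OF ts(1), of xs] by (simp add: g_def divide_less_0_iff neg_less_0_iff_less)
        thus ?thesis by (simp add: L_def F_def)
      qed
      have int: "ts \<in> interior {0::real..}" using tsp by (simp add: interior_real_atLeast)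
      have Hd: "((\<lambda>r. H xs r) has_real_derivative Dd xs ts) (at ts)"
        using Hder[OF ts(1), of xs] at_within_interior[OF int] by simp
      have Dnn: "Dd xs ts \<ge> 0"
      proof (rule ccontr)
        assume "\<not> ?thesis"
        hence "Dd xs ts < 0" by simp
        from DERIV_neg_dec_left[OF Hd this] obtain d where d: "d > 0" "\<forall>h>0. h < d \<longrightarrow> H xs ts < H xs (ts - h)" by blast
        define h where "h = min (d / 2) ts"
        have h: "h > 0" "h < d" "h \<le> ts" using d tsp by (auto simp: h_def)
        have "H xs ts < H xs (ts - h)" using d(2) h by blast
        moreover have "\<Phi> xs (ts - h) \<le> \<Phi> xs ts" using glob[of "ts - h" xs] h ts by auto
        ultimately show False by (simp add: \<Phi>_def)
      qed
      have nb: "\<forall>y. E xs y \<longrightarrow> - glap E w mu F y / F y \<le> - glap E w mu F xs / F xs + \<epsilon> / ts"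
      proof (intro allI impI)
        fix y assume exy: "E xs y"
        have "\<Phi> y ts \<le> \<Phi> xs ts" using glob ts by auto
        moreover have "\<psi> y \<le> \<psi> xs + 1" using gdist_step[OF wg exy, of x] by (simp add: \<psi>_def)
        moreover have "\<epsilon> * \<psi> y \<le> \<epsilon> * (\<psi> xs + 1)" using e0 calculation(2) by (intro mult_left_mono) auto
        ultimately have "H y ts \<le> H xs ts + \<epsilon>" unfolding \<Phi>_def by (simp add: algebra_simps)
        hence "ts * (- L y ts / f y ts) \<le> ts * (- L xs ts / f xs ts) + \<epsilon>" by (simp add: H_def)
        hence "- L y ts / f y ts \<le> - L xs ts / f xs ts + \<epsilon> / ts" using tsp
          by (simp add: field_simps)
        thus "- glap E w mu F y / F y \<le> - glap E w mu F xs / F xs + \<epsilon> / ts" by (simp add: L_def F_def)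
      qed
      have cdeF: "gGamma2_tilde E w mu F xs \<ge> (1/n) * (glap E w mu F xs)\<^sup>2 + (- K) * gGamma E w mu F F xs"
        using cde Fpos unfolding CDE_def by blast
      have fpF: "\<forall>z. fp z ts = glap E w mu F z + gGamma E w mu F F z / F z"
        using fp_eq[OF ts(1)] by (simp add: F_def L_def)
      have key: "- glap E w mu F xs / F xs - ts * glap E w mu (\<lambda>y. fp y ts) xs / F xs + ts * glap E w mu F xs * fp xs ts / (F xs)\<^sup>2
         \<le> - glap E w mu F xs / F xs - 2*ts*(glap E w mu F xs)\<^sup>2/(n * (F xs)\<^sup>2) + 2*ts*K*gGamma E w mu F F xs/(F xs)\<^sup>2
            + ts*(\<epsilon> / ts)*((1/mu xs)*(\<Sum>y\<in>{y. E xs y}. w xs y * (F y)\<^sup>2))/(F xs)\<^sup>2"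
        by (rule key_ineq[where fp = "\<lambda>y. fp y ts"]) (use Fpos mupos wpos cdeF nb fpF ts n0 in auto)
      define Gq where "Gq = gGamma E w mu F F xs / (F xs)\<^sup>2"
      define Sq where "Sq = (1/mu xs)*(\<Sum>y\<in>{y. E xs y}. w xs y * (F y)\<^sup>2) / (F xs)\<^sup>2"
      have bG: "Gq \<le> A" and bS: "Sq \<le> B"
        using bounds_GS[of F mu xs E w Dm Dw] Fpos mupos wpos fin Dm_ge Dw_ge Dw0 Lneg
        by (auto simp: Gq_def Sq_def A_def B_def)
      have Gq0: "Gq \<ge> 0" unfolding Gq_def gGamma_self using mupos
        by (intro divide_nonneg_nonneg mult_nonneg_nonneg sum_nonneg) (auto simp: less_imp_le wpos)
      have gsq: "(glap E w mu F xs)\<^sup>2/(n * (F xs)\<^sup>2) = g\<^sup>2 / n"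
        by (simp add: g_def L_def F_def power_divide)
      have Dd_eq: "Dd xs ts = - glap E w mu F xs / F xs - ts * glap E w mu (\<lambda>y. fp y ts) xs / F xs + ts * glap E w mu F xs * fp xs ts / (F xs)\<^sup>2"
        by (simp add: Dd_def L_def F_def)
      have ineq1: "0 \<le> g - 2 * ts * g\<^sup>2 / n + 2 * ts * K * Gq + \<epsilon> * Sq"
      proof -
        have "ts*(\<epsilon> / ts)*((1/mu xs)*(\<Sum>y\<in>{y. E xs y}. w xs y * (F y)\<^sup>2))/(F xs)\<^sup>2 = \<epsilon> * Sq"
          using tsp by (simp add: Sq_def)
        moreover have "- glap E w mu F xs / F xs = g" by (simp add: g_def L_def F_def)
        moreover have "2*ts*(glap E w mu F xs)\<^sup>2/(n * (F xs)\<^sup>2) = 2 * ts * g\<^sup>2 / n"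
        proof -
          have "2*ts*(glap E w mu F xs)\<^sup>2/(n * (F xs)\<^sup>2) = 2*ts*((glap E w mu F xs)\<^sup>2/(n * (F xs)\<^sup>2))" by simp
          also have "\<dots> = 2*ts*(g\<^sup>2/n)" using gsq by simp
          finally show ?thesis by simp
        qed
        moreover have "2*ts*K*gGamma E w mu F F xs/(F xs)\<^sup>2 = 2 * ts * K * Gq" by (simp add: Gq_def)
        ultimately show ?thesis using key Dd_eq Dnn by linarith
      qed
      have ineq2: "0 \<le> H xs ts - 2 * (H xs ts)\<^sup>2 / n + 2 * ts\<^sup>2 * K * Gq + ts * \<epsilon> * Sq"
      proof -
        have "0 \<le> ts * (g - 2 * ts * g\<^sup>2 / n + 2 * ts * K * Gq + \<epsilon> * Sq)" using ineq1 tsp by simp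
        thus ?thesis unfolding Hg by (simp add: algebra_simps power2_eq_square)
      qed
      have Sq0: "Sq \<ge> 0" unfolding Sq_def using mupos
        by (intro divide_nonneg_nonneg mult_nonneg_nonneg sum_nonneg) (auto simp: less_imp_le wpos)
      have "2 * ts\<^sup>2 * K * Gq \<le> 2 * t\<^sup>2 * K * A"
      proof -
        have "ts\<^sup>2 \<le> t\<^sup>2" using ts by (intro power_mono) auto
        hence "ts\<^sup>2 * (K * Gq) \<le> t\<^sup>2 * (K * A)" using K0 Gq0 bG
          by (intro mult_mono mult_left_mono) auto
        thus ?thesis by (simp add: algebra_simps)
      qed
      moreover have "ts * \<epsilon> * Sq \<le> t * \<epsilon> * B"
        using ts e0 Sq0 bS by (intro mult_mono) auto
      ultimately have "2 * (H xs ts)\<^sup>2 / n \<le> H xs ts + (2 * t\<^sup>2 * K * A + t * \<epsilon> * B)" using ineq2 by linarith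
      hence "H xs ts \<le> n / 2 + sqrt (n * (2 * t\<^sup>2 * K * A + t * \<epsilon> * B) / 2)"
        using n0 K0 A0 B0 t0 e0 by (intro quad_bound) auto
      also have "\<dots> \<le> Bd" unfolding Bd_def using sqrt_split[of n K A t \<epsilon> B] n0 K0 A0 B0 t0 e0 by auto
      finally show ?thesis .
    qed
    have "H x t = \<Phi> x t" by (simp add: \<Phi>_def psi0)
    also have "\<dots> \<le> \<Phi> xs ts" using glob t0 by auto
    also have "\<dots> \<le> H xs ts" using psinn[of xs] e0 by (simp add: \<Phi>_def)
    finally show ?thesis using Hts by (simp add: Bd_def)
  qed
  have tg: "t * (- L x t / f x t) \<le> n / 2 + t * sqrt (n * K * A)"
    by (rule eps_bound[where c = "sqrt (n * t * B / 2)"])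
       (use claim n0 t0 B0 in \<open>auto simp: H_def\<close>)
  hence gle: "- L x t / f x t \<le> n / (2 * t) + sqrt (n * K * A)"
    using t0 by (simp add: field_simps)
  have int: "t \<in> interior {0::real..}" using t0 by (simp add: interior_real_atLeast)
  have "((\<lambda>s. f x s) has_real_derivative fp x t) (at t)"
    using fder[of t x] t0 at_within_interior[OF int] by simp
  hence dv: "deriv (\<lambda>s. sqrt (u x s)) t = fp x t" unfolding f_def by (rule DERIV_imp_deriv)
  have ux: "u x t = f x t * f x t" using uff[of t] t0 by (metis less_imp_le)
  have lhs: "gGamma E w mu (\<lambda>y. sqrt (u y t)) (\<lambda>y. sqrt (u y t)) x / u x t
           - deriv (\<lambda>s. sqrt (u x s)) t / sqrt (u x t) = - L x t / f x t"
  proof -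
    have fxt: "f x t > 0" using fpos t0 by simp
    have "gGamma E w mu (\<lambda>y. sqrt (u y t)) (\<lambda>y. sqrt (u y t)) x = gGamma E w mu (\<lambda>y. f y t) (\<lambda>y. f y t) x"
      by (simp add: f_def)
    moreover have "sqrt (u x t) = f x t" by (simp add: f_def)
    ultimately show ?thesis unfolding dv ux fp_eq[OF less_imp_le[OF t0]] using fxt
      by (simp add: field_simps)
  qed
  have eqA: "n * K * A = n * K * D_mu E w mu * (D_w E w + 1) / 2" by (simp add: A_def Dm_def Dw_def)
  show ?thesis unfolding lhs eqA[symmetric] by (rule gle)
qed

end
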